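(* For all positive integers $n$ and $q$, let $Q := 2q+1$. Then $$f(n,q) \leq {}^{n-1}Q := Q^{Q^{\cdot^{\cdot^{\cdot^{Q}}}}},$$ where $Q$ occurs $n-1$ times in the exponential tower (with the convention that the tower of height $0$ equals $1$).
   Context: A $q$-ary word is a finite string of characters over an alphabet of $q$ letters; the empty word is $\varepsilon$ and words form a semigroup under concatenation. $V$ is a subword of $W$ if $W = UVU'$ for some (possibly empty) words $U,U'$. A word $W$ is an instance of a word $V = x_0x_1\cdots x_{m-1}$ (each $x_i$ a letter) if $W = A_0A_1\cdots A_{m-1}$ with each $A_i$ nonempty and $A_i = A_j$ whenever $x_i = x_j$ (equivalently, $W=\phi(V)$ for a semigroup homomorphism $\phi$ sending letters to nonempty words). A word $U$ encounters $V$ if some subword of $U$ is an instance of $V$; otherwise $U$ avoids $V$. The Zimin words are defined by $Z_0 := \varepsilon$ and $Z_{n+1} := Z_n x_n Z_n$ for distinct letters $x_0,x_1,\dots$ (so $Z_1 = a$, $Z_2 = aba$, $Z_3 = abacaba$, ...). For positive integers $n,q$, $f(n,q)$ denotes the smallest integer $M$ such that every $q$-ary word of length $M$ encounters $Z_n$. *)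

theory Defs
  imports Main
begin

definition qary_word :: "nat \<Rightarrow> nat list \<Rightarrow> bool" where
  "qary_word q w \<longleftrightarrow> set w \<subseteq> {..<q}"

definition instance_of :: "'b list \<Rightarrow> 'a list \<Rightarrow> bool" where
  "instance_of W V \<longleftrightarrow>
     (\<exists>\<phi> :: 'a \<Rightarrow> 'b list. (\<forall>x\<in>set V. \<phi> x \<noteq> []) \<and> W = concat (map \<phi> V))"

definition encounters :: "'b list \<Rightarrow> 'a list \<Rightarrow> bool" where
  "encounters U V \<longleftrightarrow> (\<exists>A S B. U = A @ S @ B \<and> instance_of S V)"

text \<open>Zimin words with distinct letters x_i = i.\<close>
fun zimin :: "nat \<Rightarrow> nat list" where
  "zimin 0 = []"
| "zimin (Suc n) = zimin n @ [n] @ zimin n"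

definition f :: "nat \<Rightarrow> nat \<Rightarrow> nat" where
  "f n q = (LEAST M. \<forall>w. qary_word q w \<and> length w = M \<longrightarrow> encounters w (zimin n))"

fun tower :: "nat \<Rightarrow> nat \<Rightarrow> nat" where
  "tower Q 0 = 1"
| "tower Q (Suc k) = Q ^ tower Q k"

end

theory Submission
  imports Defs
begin

lemma set_zimin: "set (zimin n) = {..<n}"
  by (induction n) (auto simp: lessThan_Suc)

lemma encounters_step:
  assumes "encounters U (zimin n)" "C \<noteq> []"
  shows "encounters (X @ U @ C @ U @ Y) (zimin (Suc n))"
proof -
  obtain A S B where U: "U = A @ S @ B" and inst: "instance_of S (zimin n)"
    using assms(1) unfolding encounters_def by blast
  obtain \<phi> :: "nat \<Rightarrow> 'a list" where ne: "\<forall>x\<in>set (zimin n). \<phi> x \<noteq> []"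
     and S: "S = concat (map \<phi> (zimin n))"
    using inst unfolding instance_of_def by blast
  define \<psi> where "\<psi> = \<phi>(n := B @ C @ A)"
  have eq: "map \<psi> (zimin n) = map \<phi> (zimin n)"
    by (rule map_cong) (auto simp: \<psi>_def set_zimin)
  have psin: "\<psi> n = B @ C @ A" by (simp add: \<psi>_def)
  have "instance_of (S @ (B @ C @ A) @ S) (zimin (Suc n))"
    unfolding instance_of_def
  proof (intro exI[of _ \<psi>] conjI)
    show "\<forall>x\<in>set (zimin (Suc n)). \<psi> x \<noteq> []"
      using ne assms(2) by (auto simp: \<psi>_def set_zimin)
    show "S @ (B @ C @ A) @ S = concat (map \<psi> (zimin (Suc n)))"
      by (simp only: zimin.simps map_append concat_append list.map concat.simps append_Nil2 eq psin S)
  qed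
  moreover have "X @ U @ C @ U @ Y = (X @ A) @ (S @ (B @ C @ A) @ S) @ (B @ Y)"
    by (simp add: U)
  ultimately show ?thesis unfolding encounters_def
    by (intro exI[of _ "X @ A"] exI[of _ "S @ (B @ C @ A) @ S"] exI[of _ "B @ Y"] conjI)
qed

lemma split_two:
  fixes w :: "'a list"
  assumes "a + M \<le> b" "b + M \<le> length w"
  shows "w = take a w @ take M (drop a w) @ take (b - a - M) (drop (a+M) w)
              @ take M (drop b w) @ drop (b+M) w"
proof -
  have d1: "drop M (drop a w) = drop (a+M) w" by (simp add: add.commute)
  have 1: "drop a w = take M (drop a w) @ drop (a+M) w"
    using append_take_drop_id[of M "drop a w"] d1 by simp
  have d2: "drop (b-a-M) (drop (a+M) w) = drop b w" using assms(1) by simp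
  have 2: "drop (a+M) w = take (b-a-M) (drop (a+M) w) @ drop b w"
    using append_take_drop_id[of "b-a-M" "drop (a+M) w"] d2 by simp
  have d3: "drop M (drop b w) = drop (b+M) w" by (simp add: add.commute)
  have 3: "drop b w = take M (drop b w) @ drop (b+M) w"
    using append_take_drop_id[of M "drop b w"] d3 by simp
  show ?thesis by (simp only: 3[symmetric] 2[symmetric] 1[symmetric] append_take_drop_id)
qed

lemma ineq:
  fixes q M :: nat
  assumes "M \<ge> 1" "q \<ge> 1"
  shows "(M+1) * q^M + M \<le> (2*q+1)^M"
  using assms
proof (induction M rule: dec_induct)
  case base
  then show ?case by simp
next
  case (step M)
  have "(Suc M + 1) * q ^ Suc M + Suc M \<le> (2*q+1) * ((M+1) * q^M + M)"
  proof (cases "q = 0")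
    case True then show ?thesis using assms by simp
  next
    case False
    then have "1 \<le> (M+1) * q^M" by (simp add: Suc_le_eq)
    moreover have "(M+2) * q^(Suc M) \<le> 2*(M+1)*q^(Suc M)" by simp
    ultimately show ?thesis by (simp add: algebra_simps)
  qed
  also have "\<dots> \<le> (2*q+1) * (2*q+1)^M" by (rule mult_le_mono2) (use step in auto)
  finally show ?case by simp
qed

lemma tower_pos: "Q \<ge> 1 \<Longrightarrow> tower Q k \<ge> 1"
  by (induction k) auto

lemma card_words: "card {xs :: nat list. set xs \<subseteq> {..<q} \<and> length xs = M} = q ^ M"
  using card_lists_length_eq[of "{..<q}" M] by simp

lemma main_ind:
  fixes q :: nat
  assumes "q \<ge> 1"
  shows "\<forall>w. qary_word q w \<and> length w \<ge> tower (2*q+1) m \<longrightarrow> encounters w (zimin (Suc m))"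
proof (induction m)
  case 0
  show ?case
  proof (intro allI impI)
    fix w :: "nat list" assume h: "qary_word q w \<and> length w \<ge> tower (2*q+1) 0"
    then have "w \<noteq> []" by auto
    then have "instance_of w (zimin (Suc 0))"
      unfolding instance_of_def by (intro exI[of _ "\<lambda>_. w"]) simp
    then show "encounters w (zimin (Suc 0))"
      unfolding encounters_def by (metis append_Nil append_Nil2)
  qed
next
  case (Suc m)
  define M where "M = tower (2*q+1) m"
  have M1: "M \<ge> 1" unfolding M_def by (rule tower_pos) simp
  show ?case
  proof (intro allI impI)
    fix w :: "nat list" assume h: "qary_word q w \<and> length w \<ge> tower (2*q+1) (Suc m)"
    define K where "K = q ^ M"
    have len: "K * (M+1) + M \<le> length w"
    proof -
      have t: "tower (2*q+1) (Suc m) = (2*q+1)^M" by (simp add: M_def)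
      have "K * (M+1) + M = (M+1) * q^M + M" by (simp add: K_def)
      then show ?thesis using h ineq[OF M1 assms] t by linarith
    qed
    define g where "g i = take M (drop (i*(M+1)) w)" for i
    have gin: "g ` {0..K} \<subseteq> {xs. set xs \<subseteq> {..<q} \<and> length xs = M}"
    proof
      fix x assume "x \<in> g ` {0..K}"
      then obtain i where i: "i \<le> K" "x = g i" by auto
      have "i*(M+1) + M \<le> K*(M+1) + M" using i by (intro add_mono mult_le_mono) auto
      then have "length x = M" using len i by (simp add: g_def)
      moreover have "set x \<subseteq> set w" using i
        by (auto simp: g_def dest: in_set_takeD in_set_dropD)
      ultimately show "x \<in> {xs. set xs \<subseteq> {..<q} \<and> length xs = M}"
        using h by (auto simp: qary_word_def)
    qed
    have fin: "finite {xs :: nat list. set xs \<subseteq> {..<q} \<and> length xs = M}"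
      using finite_lists_length_eq[of "{..<q}" M] by simp
    have "card (g ` {0..K}) \<le> K"
      using card_mono[OF fin gin] card_words by (simp add: K_def)
    then have "\<not> inj_on g {0..K}"
    proof (intro notI)
      assume "card (g ` {0..K}) \<le> K" "inj_on g {0..K}"
      then show False using card_image[of g "{0..K}"] by simp
    qed
    then obtain i j where ij: "i \<le> K" "j \<le> K" "i \<noteq> j" "g i = g j"
      unfolding inj_on_def by auto
    then obtain a b where ab: "a \<le> K" "b \<le> K" "a < b" "g a = g b"
      by (metis linorder_neqE_nat)
    define U where "U = g a"
    have bM: "b*(M+1) + M \<le> length w"
    proof -
      have "b*(M+1) + M \<le> K*(M+1) + M" using ab by (intro add_mono mult_le_mono) auto
      then show ?thesis using len by linarith
    qed
    have aM: "a*(M+1) + M + 1 \<le> b*(M+1)"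
    proof -
      have "(a+1)*(M+1) \<le> b*(M+1)" using ab by (intro mult_right_mono) auto
      then show ?thesis by (simp add: algebra_simps)
    qed
    have sp: "w = take (a*(M+1)) w @ g a @ take (b*(M+1) - a*(M+1) - M) (drop (a*(M+1)+M) w)
              @ g b @ drop (b*(M+1)+M) w"
      unfolding g_def by (rule split_two) (use aM bM in auto)
    have Cne: "take (b*(M+1) - a*(M+1) - M) (drop (a*(M+1)+M) w) \<noteq> []"
      using aM bM by auto
    have Ulen: "length U = M"
    proof -
      have "a*(M+1) + M \<le> length w" using aM bM by linarith
      then show ?thesis by (simp add: U_def g_def)
    qed
    have Uq: "qary_word q U"
      using h by (auto simp: U_def g_def qary_word_def dest: in_set_takeD in_set_dropD)
    have "encounters U (zimin (Suc m))"
      using Suc Ulen Uq by (simp add: M_def)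
    define R where "R = take (a*(M+1)) w @ U @ take (b*(M+1) - a*(M+1) - M) (drop (a*(M+1)+M) w)
              @ U @ drop (b*(M+1)+M) w"
    have wR: "w = R" unfolding R_def U_def ab(4) by (rule sp[unfolded ab(4)])
    have "encounters R (zimin (Suc (Suc m)))"
      unfolding R_def by (rule encounters_step[OF _ Cne]) fact
    then show "encounters w (zimin (Suc (Suc m)))"
      using wR by simp
  qed
qed

theorem mainTheorem1:
  fixes n q :: nat
  assumes "n \<ge> 1" and "q \<ge> 1"
  shows "f n q \<le> tower (2 * q + 1) (n - 1)"
proof -
  obtain m where n: "n = Suc m" using assms(1) by (cases n) auto
  have nm: "n - 1 = m" using n by simp
  have "\<forall>w. qary_word q w \<and> length w = tower (2*q+1) (n-1) \<longrightarrow> encounters w (zimin n)"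
  proof (intro allI impI)
    fix w assume h: "qary_word q w \<and> length w = tower (2*q+1) (n-1)"
    have "qary_word q w \<and> length w \<ge> tower (2*q+1) m" using h nm by simp
    then show "encounters w (zimin n)" using main_ind[OF assms(2), of m] n by blast
  qed
  then show ?thesis unfolding f_def by (rule Least_le)
qed

end
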